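(* Let $N$ be a positive integer, let $(\lambda_k)_{k=-\infty}^\infty$ be a strictly increasing sequence of real numbers, and let $\delta_k:=\min\{\lambda_k-\lambda_{k-1},\lambda_{k+1}-\lambda_k\}$. Assume $C_3$ is a positive constant such that $$\sum_{m=1}^N\sum_{\substack{n=1\\ n\ne m}}^N\frac{\delta_m^{3/2}\delta_n^{1/2}t_mt_n}{(\lambda_m-\lambda_n)^2}\le C_3\sum_{n=1}^N t_n^2$$ for all nonnegative real numbers $t_1,\dots,t_N$. Then for all complex numbers $z_1,\dots,z_N$, $$\left|\sum_{m=1}^N\sum_{\substack{n=1\\ n\ne m}}^N\frac{z_m\overline{z_n}}{\lambda_m-\lambda_n}\right|\le\sqrt{\frac{\pi^2}{3}+2C_3}\;\sum_{n=1}^N\frac{|z_n|^2}{\delta_n}.$$ *)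

theory Defs
  imports "HOL-Analysis.Analysis"
begin

definition gap :: "(int \<Rightarrow> real) \<Rightarrow> int \<Rightarrow> real" where
  "gap lam k = min (lam k - lam (k - 1)) (lam (k + 1) - lam k)"

end

theory Submission
  imports Defs "HOL-Probability.Probability"
begin


lemma slope_exp1:
  fixes u v :: real assumes "0 < u" "u \<le> v"
  shows "u / (1 - exp (-u)) \<le> v / (1 - exp (-v))"
proof -
  have v: "0 < v" using assms by simp
  have "exp ((1 - u/v) * 0 + (u/v) * (-v)) \<le> (1 - u/v) * exp 0 + (u/v) * exp (-v)"
    using convex_onD[OF exp_convex, of "u/v" 0 "-v"] assms v by simp
  hence "exp (-u) \<le> (u/v) * exp (-v) + (1 - u/v)" using v by simp
  hence "v * exp (-u) \<le> v * ((1 - u/v) + (u/v) * exp (-v))" using v by (intro mult_left_mono) auto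
  also have "\<dots> = v - u + u * exp (-v)" using v by (simp add: field_simps)
  finally have h: "u * (1 - exp (-v)) \<le> v * (1 - exp (-u))" by (simp add: algebra_simps)
  have p1: "0 < 1 - exp (-u)" using assms by simp
  have p2: "0 < 1 - exp (-v)" using v by simp
  show ?thesis using h p1 p2 by (simp add: divide_simps mult.commute)
qed

lemma slope_exp2:
  fixes u v :: real assumes "0 < u" "u \<le> v"
  shows "v / (exp v - 1) \<le> u / (exp u - 1)"
proof -
  have v: "0 < v" using assms by simp
  have "exp ((1 - u/v) * 0 + (u/v) * v) \<le> (1 - u/v) * exp 0 + (u/v) * exp v"
    using convex_onD[OF exp_convex, of "u/v" 0 v] assms v by simp
  hence "exp u \<le> (u/v) * exp v + (1 - u/v)" using v by simp
  hence "v * exp u \<le> v * ((1 - u/v) + (u/v) * exp v)" using v by (intro mult_left_mono) auto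
  also have "\<dots> = v - u + u * exp v" using v by (simp add: field_simps)
  finally have h: "v * (exp u - 1) \<le> u * (exp v - 1)" by (simp add: algebra_simps)
  have p1: "0 < exp u - 1" using assms by simp
  have p2: "0 < exp v - 1" using v by simp
  show ?thesis using h p1 p2 by (simp add: divide_simps mult.commute)
qed

definition W :: "real \<Rightarrow> real \<Rightarrow> ennreal" where
  "W c s = (\<Sum>k. ennreal (s / (c + real k * s)^2))"

lemma term_integral:
  fixes l s :: real assumes l: "0 < l" and s: "0 \<le> s"
  shows "ennreal (s / l^2) = (\<integral>\<^sup>+x. ennreal (if 0 < x then s * x * exp (-(l*x)) else 0) \<partial>lborel)"
proof -
  have m: "(\<integral>\<^sup>+ x. ennreal (erlang_density 0 l x * x ^ 1) \<partial>lborel) = ennreal (1 / l)"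
    using nn_integral_erlang_ith_moment[OF l, of 0 1] by simp
  have "(\<integral>\<^sup>+x. ennreal (if 0 < x then s * x * exp (-(l*x)) else 0) \<partial>lborel)
      = (\<integral>\<^sup>+x. ennreal (s/l) * ennreal (erlang_density 0 l x * x ^ 1) \<partial>lborel)"
    using l s by (intro nn_integral_cong) (auto simp: erlang_density_def ennreal_mult[symmetric])
  also have "\<dots> = ennreal (s/l) * (\<integral>\<^sup>+ x. ennreal (erlang_density 0 l x * x ^ 1) \<partial>lborel)"
    by (rule nn_integral_cmult) auto
  also have "\<dots> = ennreal (s / l^2)" using m l s by (simp add: ennreal_mult[symmetric] power2_eq_square)
  finally show ?thesis by simp
qed

lemma W_rep:
  fixes c s :: real assumes c: "0 < c" and s: "0 < s"
  shows "W c s = (\<integral>\<^sup>+x. ennreal (if 0 < x then x * exp (-(c*x)) * (s / (1 - exp (-(s*x)))) else 0) \<partial>lborel)"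
proof -
  have "W c s = (\<Sum>k. \<integral>\<^sup>+x. ennreal (if 0 < x then s * x * exp (-((c + real k * s)*x)) else 0) \<partial>lborel)"
    unfolding W_def using c s by (intro suminf_cong term_integral) (auto intro: add_pos_nonneg)
  also have "\<dots> = (\<integral>\<^sup>+x. (\<Sum>k. ennreal (if 0 < x then s * x * exp (-((c + real k * s)*x)) else 0)) \<partial>lborel)"
    by (rule nn_integral_suminf[symmetric]) auto
  also have "\<dots> = (\<integral>\<^sup>+x. ennreal (if 0 < x then x * exp (-(c*x)) * (s / (1 - exp (-(s*x)))) else 0) \<partial>lborel)"
  proof (intro nn_integral_cong)
    fix x :: real
    show "(\<Sum>k. ennreal (if 0 < x then s * x * exp (-((c + real k * s)*x)) else 0))
        = ennreal (if 0 < x then x * exp (-(c*x)) * (s / (1 - exp (-(s*x)))) else 0)"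
    proof (cases "0 < x")
      case False then show ?thesis by simp
    next
      case True
      have r: "norm (exp (-(s*x))) < 1" using True s by simp
      have g: "(\<lambda>k. (s * x * exp (-(c*x))) * exp (-(s*x)) ^ k) sums ((s * x * exp (-(c*x))) * (1 / (1 - exp (-(s*x)))))"
        by (rule sums_mult[OF geometric_sums[OF r]])
      have eq: "\<And>k. s * x * exp (-((c + real k * s)*x)) = (s * x * exp (-(c*x))) * exp (-(s*x)) ^ k"
      proof -
        fix k
        have "exp (-((c + real k * s)*x)) = exp (-(c*x)) * exp (real k * (-(s*x)))"
          by (simp add: exp_add[symmetric] algebra_simps)
        also have "\<dots> = exp (-(c*x)) * exp (-(s*x)) ^ k" by (simp only: exp_of_nat_mult)
        finally show "s * x * exp (-((c + real k * s)*x)) = (s * x * exp (-(c*x))) * exp (-(s*x)) ^ k" by simp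
      qed
      have "(\<Sum>k. ennreal (s * x * exp (-((c + real k * s)*x)))) = ennreal (\<Sum>k. s * x * exp (-((c + real k * s)*x)))"
        apply (rule suminf_ennreal2)
        using True s apply simp
        unfolding eq using g by (rule sums_summable)
      also have "(\<Sum>k. s * x * exp (-((c + real k * s)*x))) = (s * x * exp (-(c*x))) * (1 / (1 - exp (-(s*x))))"
        unfolding eq using g by (rule sums_unique[symmetric])
      finally show ?thesis using True by (simp add: ac_simps)
    qed
  qed
  finally show ?thesis .
qed

lemma W_mono1:
  assumes "0 < c" "c \<le> c'" "0 \<le> s"
  shows "W c' s \<le> W c s"
  unfolding W_def
proof (rule suminf_le[OF _ summableI summableI])
  fix k
  have "0 < c + real k * s" using assms by (intro add_pos_nonneg) auto
  moreover have "c + real k * s \<le> c' + real k * s" using assms by simp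
  ultimately have "s / (c' + real k * s)^2 \<le> s / (c + real k * s)^2"
    using assms by (intro divide_left_mono power_mono mult_pos_pos) auto
  then show "ennreal (s / (c' + real k * s)^2) \<le> ennreal (s / (c + real k * s)^2)"
    by (rule ennreal_leI)
qed

lemma W_mono2:
  assumes q: "0 < q" and s: "0 < s" and st: "s \<le> t"
  shows "W q s \<le> W q t"
proof -
  have t: "0 < t" using s st by simp
  show ?thesis unfolding W_rep[OF q s] W_rep[OF q t]
  proof (intro nn_integral_mono ennreal_leI)
    fix x :: real
    show "(if 0 < x then x * exp (-(q*x)) * (s / (1 - exp (-(s*x)))) else 0)
       \<le> (if 0 < x then x * exp (-(q*x)) * (t / (1 - exp (-(t*x)))) else 0)"
    proof (cases "0 < x")
      case True
      have "(s*x) / (1 - exp (-(s*x))) \<le> (t*x) / (1 - exp (-(t*x)))"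
        using True s st by (intro slope_exp1) (auto intro: mult_right_mono)
      hence "(s*x) / (1 - exp (-(s*x))) / x \<le> (t*x) / (1 - exp (-(t*x))) / x"
        using True by (intro divide_right_mono) auto
      hence "s / (1 - exp (-(s*x))) \<le> t / (1 - exp (-(t*x)))" using True by simp
      then have "x * exp (-(q*x)) * (s / (1 - exp (-(s*x)))) \<le> x * exp (-(q*x)) * (t / (1 - exp (-(t*x))))"
        using True by (intro mult_left_mono) auto
      then show ?thesis unfolding if_P[OF True] .
    qed simp
  qed
qed

lemma W_mono3:
  assumes p: "0 \<le> p" and s: "0 < s" and st: "s \<le> t"
  shows "W (p + t) t \<le> W (p + s) s"
proof -
  have t: "0 < t" using s st by simp
  have e: "\<And>x u. 0 < x \<Longrightarrow> 0 < u \<Longrightarrow> x * exp (-((p+u)*x)) * (u / (1 - exp (-(u*x))))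
     = x * exp (-(p*x)) * ((u*x) / (exp (u*x) - 1) / x)"
  proof -
    fix x u :: real assume x: "0 < x" and u: "0 < u"
    have a: "exp (-((p+u)*x)) = exp (-(p*x)) / exp (u*x)" by (simp add: exp_add[symmetric] exp_diff[symmetric] algebra_simps)
    have b: "exp (-(u*x)) = 1 / exp (u*x)" by (simp add: exp_minus field_simps)
    have c: "0 < exp (u*x) - 1" using x u by simp
    have d: "1 - exp (-(u*x)) = (exp (u*x) - 1) / exp (u*x)" unfolding b by (simp add: field_simps)
    show "x * exp (-((p+u)*x)) * (u / (1 - exp (-(u*x)))) = x * exp (-(p*x)) * ((u*x) / (exp (u*x) - 1) / x)"
    proof -
      have f: "(u*x)/(exp(u*x)-1)/x = u/(exp(u*x)-1)" using x by simp
      show ?thesis unfolding a d f using x c by (simp add: field_simps)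
    qed
  qed
  show ?thesis unfolding W_rep[OF add_nonneg_pos[OF p s] s] W_rep[OF add_nonneg_pos[OF p t] t]
  proof (intro nn_integral_mono ennreal_leI)
    fix x :: real
    show "(if 0 < x then x * exp (-((p+t)*x)) * (t / (1 - exp (-(t*x)))) else 0)
       \<le> (if 0 < x then x * exp (-((p+s)*x)) * (s / (1 - exp (-(s*x)))) else 0)"
    proof (cases "0 < x")
      case True
      have "(t*x) / (exp (t*x) - 1) \<le> (s*x) / (exp (s*x) - 1)"
        using True s st by (intro slope_exp2) (auto intro: mult_right_mono)
      hence "(t*x) / (exp (t*x) - 1) / x \<le> (s*x) / (exp (s*x) - 1) / x"
        using True by (intro divide_right_mono) auto
      then show ?thesis using True s t by (simp only: e if_True) (intro mult_left_mono, auto)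
    qed simp
  qed
qed

lemma W_head:
  assumes "0 < c" "0 \<le> s"
  shows "W c s = ennreal (s / c^2) + W (c + s) s"
proof -
  have "W c s = (\<Sum>j. ennreal (s / (c + real (j + 1) * s)^2)) + (\<Sum>j<1. ennreal (s / (c + real j * s)^2))"
    unfolding W_def by (rule suminf_offset) simp
  also have "(\<Sum>j. ennreal (s / (c + real (j + 1) * s)^2)) = W (c + s) s"
    unfolding W_def by (simp add: algebra_simps)
  finally show ?thesis by (simp add: add.commute)
qed

lemma W_base:
  assumes s: "0 < s"
  shows "W s s = ennreal (pi^2 / (6 * s))"
proof -
  have eq: "\<And>k. s / (s + real k * s)^2 = (1/s) * (1 / (real k + 1)^2)"
  proof -
    fix k
    have "(s + real k * s)^2 = s^2 * (real k + 1)^2" by algebra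
    then show "s / (s + real k * s)^2 = (1/s) * (1 / (real k + 1)^2)" using s by (simp add: power2_eq_square)
  qed
  have su: "(\<lambda>k. (1/s) * (1 / (real k + 1)^2)) sums ((1/s) * (pi^2/6))"
    using sums_mult[OF inverse_squares_sums, of "1/s"] by (simp add: add.commute)
  have "W s s = ennreal (\<Sum>k. (1/s) * (1 / (real k + 1)^2))"
    unfolding W_def eq using s su by (intro suminf_ennreal2) (auto intro: sums_summable)
  also have "(\<Sum>k. (1/s) * (1 / (real k + 1)^2)) = pi^2 / (6 * s)"
    using sums_unique[OF su] by simp
  finally show ?thesis .
qed

lemma W_step:
  assumes p: "0 \<le> p" and a: "0 < a" and b: "0 < b" and ag: "a \<le> g" and bg: "b \<le> g"
  shows "ennreal (b / (p + g)^2) + W (p + g + b) b \<le> W (p + a) a"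
proof -
  have pg: "0 < p + g" using p a ag by simp
  have "ennreal (b / (p + g)^2) + W (p + g + b) b = W (p + g) b"
    using W_head[OF pg, of b] b by simp
  also have "\<dots> \<le> W (p + a) a"
  proof (cases "a \<le> b")
    case True
    have "W (p + g) b \<le> W (p + b) b" using p b bg by (intro W_mono1) auto
    also have "\<dots> \<le> W (p + a) a" using W_mono3[OF p a True] .
    finally show ?thesis .
  next
    case False
    have "W (p + g) b \<le> W (p + a) b" using p a b ag by (intro W_mono1) auto
    also have "\<dots> \<le> W (p + a) a" using p a b False by (intro W_mono2) auto
    finally show ?thesis .
  qed
  finally show ?thesis .
qed

lemma gap_pos: "strict_mono (lam :: int \<Rightarrow> real) \<Longrightarrow> 0 < gap lam k"
  unfolding gap_def by (auto simp: strict_mono_def)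

lemma gap_le_right: "gap lam k \<le> lam (k + 1) - lam k"
  unfolding gap_def by simp

lemma gap_le_left: "gap lam k \<le> lam k - lam (k - 1)"
  unfolding gap_def by simp

lemma one_side_aux:
  assumes sm: "strict_mono (lam :: int \<Rightarrow> real)"
  shows "ennreal (\<Sum>j=1..J. gap lam (n + int j) / (lam (n + int j) - lam n)^2)
     + W (lam (n + int J) - lam n + gap lam (n + int J)) (gap lam (n + int J)) \<le> W (gap lam n) (gap lam n)"
proof (induction J)
  case 0
  then show ?case by simp
next
  case (Suc J)
  define p where "p = lam (n + int J) - lam n"
  define a where "a = gap lam (n + int J)"
  define b where "b = gap lam (n + int (Suc J))"
  define g where "g = lam (n + int (Suc J)) - lam (n + int J)"
  have p: "0 \<le> p" unfolding p_def using sm by (auto simp: strict_mono_less_eq)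
  have a: "0 < a" unfolding a_def by (rule gap_pos[OF sm])
  have b: "0 < b" unfolding b_def by (rule gap_pos[OF sm])
  have ag: "a \<le> g" unfolding a_def g_def using gap_le_right[of lam "n + int J"] by (simp add: ac_simps)
  have bg: "b \<le> g" unfolding b_def g_def using gap_le_left[of lam "n + int (Suc J)"] by (simp add: add.assoc)
  have pg: "p + g = lam (n + int (Suc J)) - lam n" unfolding p_def g_def by simp
  have nn: "0 \<le> (\<Sum>j=1..J. gap lam (n + int j) / (lam (n + int j) - lam n)^2)"
    using sm by (intro sum_nonneg divide_nonneg_nonneg) (auto intro: less_imp_le gap_pos)
  have nt: "0 \<le> b / (p + g)^2" using b by simp
  have "ennreal (\<Sum>j=1..Suc J. gap lam (n + int j) / (lam (n + int j) - lam n)^2)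
      + W (lam (n + int (Suc J)) - lam n + gap lam (n + int (Suc J))) (gap lam (n + int (Suc J)))
      = ennreal (\<Sum>j=1..J. gap lam (n + int j) / (lam (n + int j) - lam n)^2)
        + (ennreal (b / (p + g)^2) + W (p + g + b) b)"
  proof -
    have "(\<Sum>j=1..Suc J. gap lam (n + int j) / (lam (n + int j) - lam n)^2)
       = (\<Sum>j=1..J. gap lam (n + int j) / (lam (n + int j) - lam n)^2) + b / (p + g)^2"
      unfolding pg b_def by simp
    then have "ennreal (\<Sum>j=1..Suc J. gap lam (n + int j) / (lam (n + int j) - lam n)^2)
       = ennreal (\<Sum>j=1..J. gap lam (n + int j) / (lam (n + int j) - lam n)^2) + ennreal (b / (p + g)^2)"
      using ennreal_plus[OF nn nt] by simp
    moreover have "lam (n + int (Suc J)) - lam n + gap lam (n + int (Suc J)) = p + g + b"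
      unfolding pg b_def ..
    ultimately show ?thesis unfolding b_def by (simp add: add.assoc)
  qed
  also have "\<dots> \<le> ennreal (\<Sum>j=1..J. gap lam (n + int j) / (lam (n + int j) - lam n)^2) + W (p + a) a"
    by (rule add_left_mono[OF W_step[OF p a b ag bg]])
  also have "\<dots> \<le> W (gap lam n) (gap lam n)" using Suc.IH unfolding p_def a_def .
  finally show ?case .
qed

lemma one_side:
  assumes sm: "strict_mono (lam :: int \<Rightarrow> real)"
  shows "(\<Sum>j=1..J. gap lam (n + int j) / (lam (n + int j) - lam n)^2) \<le> pi^2 / (6 * gap lam n)"
proof -
  have "ennreal (\<Sum>j=1..J. gap lam (n + int j) / (lam (n + int j) - lam n)^2)
     \<le> ennreal (\<Sum>j=1..J. gap lam (n + int j) / (lam (n + int j) - lam n)^2)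
     + W (lam (n + int J) - lam n + gap lam (n + int J)) (gap lam (n + int J))" by simp
  also have "\<dots> \<le> W (gap lam n) (gap lam n)" by (rule one_side_aux[OF sm])
  also have "\<dots> = ennreal (pi^2 / (6 * gap lam n))" by (rule W_base[OF gap_pos[OF sm]])
  finally show ?thesis using gap_pos[OF sm, of n] by (subst (asm) ennreal_le_iff) auto
qed

lemma one_side_left:
  assumes sm: "strict_mono (lam :: int \<Rightarrow> real)"
  shows "(\<Sum>j=1..J. gap lam (n - int j) / (lam (n - int j) - lam n)^2) \<le> pi^2 / (6 * gap lam n)"
proof -
  define lam' where "lam' = (\<lambda>k. - lam (- k))"
  have sm': "strict_mono lam'" unfolding lam'_def using sm by (auto simp: strict_mono_def)
  have gp: "\<And>k. gap lam' k = gap lam (- k)" unfolding gap_def lam'_def by (simp add: algebra_simps min.commute)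
  have "(\<Sum>j=1..J. gap lam (n - int j) / (lam (n - int j) - lam n)^2)
      = (\<Sum>j=1..J. gap lam' (- n + int j) / (lam' (- n + int j) - lam' (- n))^2)"
    unfolding gp by (intro sum.cong) (auto simp: lam'_def power2_commute algebra_simps)
  also have "\<dots> \<le> pi^2 / (6 * gap lam' (- n))" by (rule one_side[OF sm'])
  finally show ?thesis unfolding gp by simp
qed

lemma diag_bound:
  assumes sm: "strict_mono (lam :: int \<Rightarrow> real)" and n: "n \<in> {1..int N}"
  shows "(\<Sum>m\<in>{1..int N} - {n}. gap lam m / (lam m - lam n)^2) \<le> pi^2 / (3 * gap lam n)"
proof -
  let ?f = "\<lambda>m. gap lam m / (lam m - lam n)^2"
  have split: "{1..int N} - {n} = {n+1..int N} \<union> {1..n-1}" using n by auto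
  have R: "{n+1..int N} = (\<lambda>j. n + int j) ` {1..nat (int N - n)}"
  proof (rule set_eqI, rule iffI)
    fix m assume "m \<in> {n+1..int N}"
    then show "m \<in> (\<lambda>j. n + int j) ` {1..nat (int N - n)}"
      by (intro image_eqI[where x="nat (m - n)"]) auto
  qed auto
  have L: "{1..n-1} = (\<lambda>j. n - int j) ` {1..nat (n - 1)}"
  proof (rule set_eqI, rule iffI)
    fix m assume "m \<in> {1..n-1}"
    then show "m \<in> (\<lambda>j. n - int j) ` {1..nat (n - 1)}"
      by (intro image_eqI[where x="nat (n - m)"]) auto
  qed auto
  have "(\<Sum>m\<in>{1..int N} - {n}. ?f m) = (\<Sum>m\<in>{n+1..int N}. ?f m) + (\<Sum>m\<in>{1..n-1}. ?f m)"
    unfolding split by (rule sum.union_disjoint) auto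
  also have "(\<Sum>m\<in>{n+1..int N}. ?f m) = (\<Sum>j=1..nat (int N - n). ?f (n + int j))"
    unfolding R by (subst sum.reindex) (auto simp: inj_on_def)
  also have "(\<Sum>m\<in>{1..n-1}. ?f m) = (\<Sum>j=1..nat (n - 1). ?f (n - int j))"
    unfolding L by (subst sum.reindex) (auto simp: inj_on_def)
  also have "(\<Sum>j=1..nat (int N - n). ?f (n + int j)) + (\<Sum>j=1..nat (n - 1). ?f (n - int j))
      \<le> pi^2 / (6 * gap lam n) + pi^2 / (6 * gap lam n)"
    by (intro add_mono one_side one_side_left sm)
  also have "\<dots> = pi^2 / (3 * gap lam n)" by simp
  finally show ?thesis .
qed



lemma sum_swap_ne:
  assumes "finite I"
  shows "(\<Sum>m\<in>I. \<Sum>n\<in>I-{m}. f m n) = (\<Sum>n\<in>I. \<Sum>m\<in>I-{n}. f m n)"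
proof -
  have "(\<Sum>m\<in>I. \<Sum>n\<in>I-{m}. f m n) = (\<Sum>m\<in>I. \<Sum>n\<in>{n\<in>I. m \<noteq> n}. f m n)"
    by (intro sum.cong) auto
  also have "\<dots> = (\<Sum>n\<in>I. \<Sum>m\<in>{m\<in>I. m \<noteq> n}. f m n)"
    by (rule sum.swap_restrict) (use assms in auto)
  also have "\<dots> = (\<Sum>n\<in>I. \<Sum>m\<in>I-{n}. f m n)"
    by (intro sum.cong) auto
  finally show ?thesis .
qed

lemma triple_identity:
  fixes I :: "int set" and d :: "int \<Rightarrow> complex" and r :: "int \<Rightarrow> int \<Rightarrow> complex" and z :: "int \<Rightarrow> complex"
  assumes fin: "finite I"
    and anti: "\<And>m n. r n m = - r m n"
    and cr: "\<And>m n. cnj (r m n) = r m n"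
    and cd: "\<And>m. cnj (d m) = d m"
    and pf: "\<And>m n k. m \<in> I \<Longrightarrow> n \<in> I \<Longrightarrow> k \<in> I \<Longrightarrow> m \<noteq> n \<Longrightarrow> m \<noteq> k \<Longrightarrow> n \<noteq> k \<Longrightarrow>
              r m n * r m k = r n k * (r m n - r m k)"
  defines "w \<equiv> \<lambda>m. \<Sum>n\<in>I-{m}. z n * r m n"
  defines "c \<equiv> \<lambda>n. \<Sum>m\<in>I-{n}. d m * r m n"
  defines "E \<equiv> \<Sum>m\<in>I. \<Sum>n\<in>I-{m}. d m * z m * cnj (z n) * (r m n)^2"
  shows "(\<Sum>m\<in>I. d m * (w m * cnj (w m)))
     = (\<Sum>n\<in>I. (z n * cnj (z n)) * (\<Sum>m\<in>I-{n}. d m * (r m n)^2)) + E + cnj E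
       + (\<Sum>n\<in>I. c n * (z n * cnj (w n) + cnj (z n) * w n))"
proof -
  have cw: "\<And>m. cnj (w m) = (\<Sum>k\<in>I-{m}. cnj (z k) * r m k)"
    unfolding w_def by (simp add: cr)
  have rem1: "\<And>m n. m \<in> I \<Longrightarrow> n \<in> I \<Longrightarrow> m \<noteq> n \<Longrightarrow>
      (\<Sum>k\<in>I-{m}-{n}. cnj (z k) * r n k) = cnj (w n) - cnj (z m) * r n m"
  proof -
    fix m n assume mn: "m \<in> I" "n \<in> I" "m \<noteq> n"
    have "I - {m} - {n} = (I - {n}) - {m}" by auto
    moreover have "m \<in> I - {n}" using mn by auto
    ultimately show "(\<Sum>k\<in>I-{m}-{n}. cnj (z k) * r n k) = cnj (w n) - cnj (z m) * r n m"
      unfolding cw using fin by (simp add: sum_diff1)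
  qed
  have rem2: "\<And>m k. m \<in> I \<Longrightarrow> k \<in> I \<Longrightarrow> m \<noteq> k \<Longrightarrow>
      (\<Sum>n\<in>I-{m}-{k}. z n * r n k) = - (w k - z m * r k m)"
  proof -
    fix m k assume mk: "m \<in> I" "k \<in> I" "m \<noteq> k"
    have "I - {m} - {k} = (I - {k}) - {m}" by auto
    moreover have "m \<in> I - {k}" using mk by auto
    moreover have "\<And>n. z n * r n k = - (z n * r k n)" by (simp add: anti[of k])
    ultimately show "(\<Sum>n\<in>I-{m}-{k}. z n * r n k) = - (w k - z m * r k m)"
      unfolding w_def using fin by (simp add: sum_diff1 sum_negf)
  qed
  have perm: "\<And>m. m \<in> I \<Longrightarrow> w m * cnj (w m) =
      (\<Sum>n\<in>I-{m}. (z n * cnj (z n)) * (r m n)^2)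
      + (\<Sum>n\<in>I-{m}. z n * r m n * (cnj (w n) - cnj (z m) * r n m))
      - (\<Sum>k\<in>I-{m}. cnj (z k) * r m k * (- (w k - z m * r k m)))"
  proof -
    fix m assume m: "m \<in> I"
    let ?A = "I - {m}"
    have "w m * cnj (w m) = (\<Sum>n\<in>?A. \<Sum>k\<in>?A. z n * cnj (z k) * (r m n * r m k))"
      unfolding cw unfolding w_def sum_product by (simp add: ac_simps cr)
    also have "\<dots> = (\<Sum>n\<in>?A. z n * cnj (z n) * (r m n)^2 + (\<Sum>k\<in>?A-{n}. z n * cnj (z k) * (r m n * r m k)))"
    proof (intro sum.cong refl)
      fix n assume n: "n \<in> ?A"
      show "(\<Sum>k\<in>?A. z n * cnj (z k) * (r m n * r m k)) = z n * cnj (z n) * (r m n)^2 + (\<Sum>k\<in>?A-{n}. z n * cnj (z k) * (r m n * r m k))"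
        using fin n by (subst sum.remove[of _ n]) (auto simp: power2_eq_square)
    qed
    also have "\<dots> = (\<Sum>n\<in>?A. z n * cnj (z n) * (r m n)^2 + (\<Sum>k\<in>?A-{n}. z n * cnj (z k) * (r n k * r m n))
                    - (\<Sum>k\<in>?A-{n}. z n * cnj (z k) * (r n k * r m k)))"
    proof (intro sum.cong refl)
      fix n assume n: "n \<in> ?A"
      have "(\<Sum>k\<in>?A-{n}. z n * cnj (z k) * (r m n * r m k)) = (\<Sum>k\<in>?A-{n}. z n * cnj (z k) * (r n k * r m n) - z n * cnj (z k) * (r n k * r m k))"
      proof (intro sum.cong refl)
        fix k assume k: "k \<in> ?A - {n}"
        have "r m n * r m k = r n k * (r m n - r m k)" using k n m by (intro pf) auto
        then have "z n * cnj (z k) * (r m n * r m k) = z n * cnj (z k) * (r n k * (r m n - r m k))" by simp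
        then show "z n * cnj (z k) * (r m n * r m k) = z n * cnj (z k) * (r n k * r m n) - z n * cnj (z k) * (r n k * r m k)"
          by (simp add: right_diff_distrib mult.commute)
      qed
      then show "z n * cnj (z n) * (r m n)^2 + (\<Sum>k\<in>?A-{n}. z n * cnj (z k) * (r m n * r m k))
          = z n * cnj (z n) * (r m n)^2 + (\<Sum>k\<in>?A-{n}. z n * cnj (z k) * (r n k * r m n)) - (\<Sum>k\<in>?A-{n}. z n * cnj (z k) * (r n k * r m k))"
        by (simp add: sum_subtractf)
    qed
    also have "\<dots> = (\<Sum>n\<in>?A. z n * cnj (z n) * (r m n)^2) + (\<Sum>n\<in>?A. \<Sum>k\<in>?A-{n}. z n * cnj (z k) * (r n k * r m n))
                    - (\<Sum>n\<in>?A. \<Sum>k\<in>?A-{n}. z n * cnj (z k) * (r n k * r m k))"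
      by (simp add: sum.distrib sum_subtractf)
    also have "(\<Sum>n\<in>?A. \<Sum>k\<in>?A-{n}. z n * cnj (z k) * (r n k * r m n)) = (\<Sum>n\<in>?A. z n * r m n * (cnj (w n) - cnj (z m) * r n m))"
    proof (intro sum.cong refl)
      fix n assume n: "n \<in> ?A"
      have "(\<Sum>k\<in>?A-{n}. z n * cnj (z k) * (r n k * r m n)) = z n * r m n * (\<Sum>k\<in>?A-{n}. cnj (z k) * r n k)"
        by (simp add: sum_distrib_left ac_simps)
      also have "\<dots> = z n * r m n * (cnj (w n) - cnj (z m) * r n m)" using rem1[of m n] m n by auto
      finally show "(\<Sum>k\<in>?A-{n}. z n * cnj (z k) * (r n k * r m n)) = z n * r m n * (cnj (w n) - cnj (z m) * r n m)" .
    qed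
    also have "(\<Sum>n\<in>?A. \<Sum>k\<in>?A-{n}. z n * cnj (z k) * (r n k * r m k)) = (\<Sum>k\<in>?A. \<Sum>n\<in>?A-{k}. z n * cnj (z k) * (r n k * r m k))"
      by (rule sum_swap_ne) (use fin in auto)
    also have "\<dots> = (\<Sum>k\<in>?A. cnj (z k) * r m k * (- (w k - z m * r k m)))"
    proof (intro sum.cong refl)
      fix k assume k: "k \<in> ?A"
      have "(\<Sum>n\<in>?A-{k}. z n * cnj (z k) * (r n k * r m k)) = cnj (z k) * r m k * (\<Sum>n\<in>?A-{k}. z n * r n k)"
        by (simp add: sum_distrib_left ac_simps)
      also have "\<dots> = cnj (z k) * r m k * (- (w k - z m * r k m))" using rem2[of m k] m k by auto
      finally show "(\<Sum>n\<in>?A-{k}. z n * cnj (z k) * (r n k * r m k)) = cnj (z k) * r m k * (- (w k - z m * r k m))" .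
    qed
    finally show "w m * cnj (w m) =
      (\<Sum>n\<in>I-{m}. (z n * cnj (z n)) * (r m n)^2)
      + (\<Sum>n\<in>I-{m}. z n * r m n * (cnj (w n) - cnj (z m) * r n m))
      - (\<Sum>k\<in>I-{m}. cnj (z k) * r m k * (- (w k - z m * r k m)))" .
  qed
  have P: "\<And>m. m \<in> I \<Longrightarrow> d m * (w m * cnj (w m)) =
        (\<Sum>n\<in>I-{m}. d m * ((z n * cnj (z n)) * (r m n)^2))
      + (\<Sum>n\<in>I-{m}. d m * (z n * r m n * cnj (w n)))
      + (\<Sum>n\<in>I-{m}. d m * (z n * cnj (z m) * (r m n)^2))
      + (\<Sum>k\<in>I-{m}. d m * (cnj (z k) * r m k * w k))
      + (\<Sum>k\<in>I-{m}. d m * (z m * cnj (z k) * (r m k)^2))"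
  proof -
    fix m assume m: "m \<in> I"
    have e1: "\<And>n. z n * r m n * (cnj (w n) - cnj (z m) * r n m) = z n * r m n * cnj (w n) + z n * cnj (z m) * (r m n)^2"
      by (simp add: anti[of m] algebra_simps power2_eq_square)
    have e2: "\<And>k. cnj (z k) * r m k * (- (w k - z m * r k m)) = - (cnj (z k) * r m k * w k) - z m * cnj (z k) * (r m k)^2"
      by (simp add: anti[of m] algebra_simps power2_eq_square)
    have "w m * cnj (w m) =
        (\<Sum>n\<in>I-{m}. (z n * cnj (z n)) * (r m n)^2)
      + ((\<Sum>n\<in>I-{m}. z n * r m n * cnj (w n)) + (\<Sum>n\<in>I-{m}. z n * cnj (z m) * (r m n)^2))
      + ((\<Sum>k\<in>I-{m}. cnj (z k) * r m k * w k) + (\<Sum>k\<in>I-{m}. z m * cnj (z k) * (r m k)^2))"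
      unfolding perm[OF m] e1 e2 by (simp add: sum.distrib sum_negf sum_subtractf)
    then show "d m * (w m * cnj (w m)) =
        (\<Sum>n\<in>I-{m}. d m * ((z n * cnj (z n)) * (r m n)^2))
      + (\<Sum>n\<in>I-{m}. d m * (z n * r m n * cnj (w n)))
      + (\<Sum>n\<in>I-{m}. d m * (z n * cnj (z m) * (r m n)^2))
      + (\<Sum>k\<in>I-{m}. d m * (cnj (z k) * r m k * w k))
      + (\<Sum>k\<in>I-{m}. d m * (z m * cnj (z k) * (r m k)^2))"
      by (simp add: sum_distrib_left distrib_left add.assoc)
  qed
  have S1: "(\<Sum>m\<in>I. \<Sum>n\<in>I-{m}. d m * ((z n * cnj (z n)) * (r m n)^2)) = (\<Sum>n\<in>I. (z n * cnj (z n)) * (\<Sum>m\<in>I-{n}. d m * (r m n)^2))"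
    by (subst sum_swap_ne[OF fin]) (simp add: sum_distrib_left ac_simps)
  have S2: "(\<Sum>m\<in>I. \<Sum>n\<in>I-{m}. d m * (z n * r m n * cnj (w n))) = (\<Sum>n\<in>I. c n * (z n * cnj (w n)))"
    unfolding c_def sum_distrib_right by (subst sum_swap_ne[OF fin]) (intro sum.cong refl, simp add: ac_simps)
  have S3: "(\<Sum>m\<in>I. \<Sum>k\<in>I-{m}. d m * (cnj (z k) * r m k * w k)) = (\<Sum>n\<in>I. c n * (cnj (z n) * w n))"
    unfolding c_def sum_distrib_right by (subst sum_swap_ne[OF fin]) (intro sum.cong refl, simp add: ac_simps)
  have S4: "(\<Sum>m\<in>I. \<Sum>k\<in>I-{m}. d m * (z m * cnj (z k) * (r m k)^2)) = E"
    unfolding E_def by (simp add: ac_simps)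
  have S5: "(\<Sum>m\<in>I. \<Sum>n\<in>I-{m}. d m * (z n * cnj (z m) * (r m n)^2)) = cnj E"
    unfolding E_def by (simp add: cd cr ac_simps)
  have "(\<Sum>m\<in>I. d m * (w m * cnj (w m))) =
      (\<Sum>m\<in>I. \<Sum>n\<in>I-{m}. d m * ((z n * cnj (z n)) * (r m n)^2))
      + (\<Sum>m\<in>I. \<Sum>n\<in>I-{m}. d m * (z n * r m n * cnj (w n)))
      + (\<Sum>m\<in>I. \<Sum>n\<in>I-{m}. d m * (z n * cnj (z m) * (r m n)^2))
      + (\<Sum>m\<in>I. \<Sum>k\<in>I-{m}. d m * (cnj (z k) * r m k * w k))
      + (\<Sum>m\<in>I. \<Sum>k\<in>I-{m}. d m * (z m * cnj (z k) * (r m k)^2))"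
    using P by (simp add: sum.distrib)
  also have "\<dots> = (\<Sum>n\<in>I. (z n * cnj (z n)) * (\<Sum>m\<in>I-{n}. d m * (r m n)^2)) + E + cnj E
       + (\<Sum>n\<in>I. c n * (z n * cnj (w n) + cnj (z n) * w n))"
    unfolding S1 S2 S3 S4 S5 by (simp add: distrib_left sum.distrib algebra_simps)
  finally show ?thesis .
qed



definition wr :: "(int \<Rightarrow> real) \<Rightarrow> int set \<Rightarrow> (int \<Rightarrow> real) \<Rightarrow> int \<Rightarrow> real" where
  "wr lam I x m = (\<Sum>n\<in>I-{m}. x n / (lam m - lam n))"
definition Qr :: "(int \<Rightarrow> real) \<Rightarrow> int set \<Rightarrow> (int \<Rightarrow> real) \<Rightarrow> real" where
  "Qr lam I x = (\<Sum>m\<in>I. gap lam m * (wr lam I x m)^2)"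
definition Nr :: "(int \<Rightarrow> real) \<Rightarrow> int set \<Rightarrow> (int \<Rightarrow> real) \<Rightarrow> real" where
  "Nr lam I x = (\<Sum>m\<in>I. (x m)^2 / gap lam m)"
definition Bq :: "(int \<Rightarrow> real) \<Rightarrow> int set \<Rightarrow> (int \<Rightarrow> real) \<Rightarrow> (int \<Rightarrow> real) \<Rightarrow> real" where
  "Bq lam I x y = (\<Sum>m\<in>I. gap lam m * wr lam I x m * wr lam I y m)"
definition Bn :: "(int \<Rightarrow> real) \<Rightarrow> int set \<Rightarrow> (int \<Rightarrow> real) \<Rightarrow> (int \<Rightarrow> real) \<Rightarrow> real" where
  "Bn lam I x y = (\<Sum>m\<in>I. x m * y m / gap lam m)"

lemma wr_lin: "wr lam I (\<lambda>n. x n + t * y n) m = wr lam I x m + t * wr lam I y m"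
  unfolding wr_def by (simp add: sum.distrib sum_distrib_left add_divide_distrib)

lemma wr_scale: "wr lam I (\<lambda>n. c * x n) m = c * wr lam I x m"
  unfolding wr_def by (simp add: sum_distrib_left)

lemma Qr_expand: "Qr lam I (\<lambda>n. x n + t * y n) = Qr lam I x + 2 * t * Bq lam I x y + t^2 * Qr lam I y"
  unfolding Qr_def Bq_def wr_lin
  by (simp add: power2_sum sum.distrib sum_distrib_left algebra_simps power_mult_distrib)

lemma Nr_expand: "Nr lam I (\<lambda>n. x n + t * y n) = Nr lam I x + 2 * t * Bn lam I x y + t^2 * Nr lam I y"
  unfolding Nr_def Bn_def
  by (simp add: power2_sum sum.distrib sum_distrib_left algebra_simps power_mult_distrib add_divide_distrib)

lemma Qr_scale: "Qr lam I (\<lambda>n. c * x n) = c^2 * Qr lam I x"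
  unfolding Qr_def wr_scale by (simp add: sum_distrib_left power_mult_distrib algebra_simps)

lemma Nr_scale: "Nr lam I (\<lambda>n. c * x n) = c^2 * Nr lam I x"
  unfolding Nr_def by (simp add: sum_distrib_left power_mult_distrib algebra_simps)

lemma wr_restrict: "wr lam I (\<lambda>n. if n \<in> I then x n else 0) m = wr lam I x m"
  unfolding wr_def by (intro sum.cong) auto

lemma Qr_restrict: "Qr lam I (\<lambda>n. if n \<in> I then x n else 0) = Qr lam I x"
  unfolding Qr_def wr_restrict ..

lemma Nr_restrict: "Nr lam I (\<lambda>n. if n \<in> I then x n else 0) = Nr lam I x"
  unfolding Nr_def by (intro sum.cong) auto

lemma Nr_nonneg: "strict_mono lam \<Longrightarrow> 0 \<le> Nr lam I x"
  unfolding Nr_def by (intro sum_nonneg divide_nonneg_nonneg) (auto intro: less_imp_le gap_pos)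

lemma Qr_nonneg: "strict_mono lam \<Longrightarrow> 0 \<le> Qr lam I x"
  unfolding Qr_def by (intro sum_nonneg mult_nonneg_nonneg) (auto intro: less_imp_le gap_pos)

lemma quad_zero:
  fixes a b :: real
  assumes "\<And>t. 0 \<le> a * t + b * t^2"
  shows "a = 0"
proof (rule ccontr)
  assume a: "a \<noteq> 0"
  define c where "c = \<bar>b\<bar> + 1"
  define t where "t = - a / c"
  have pos: "0 < c" unfolding c_def by simp
  have "a * t + b * t^2 = (a^2 / c^2) * (b - c)"
    unfolding t_def using pos by (simp add: field_simps power2_eq_square)
  also have "\<dots> < 0" using a pos by (intro mult_pos_neg) (auto simp: c_def)
  finally show False using assms[of t] by simp
qed

lemma cont_Nr: "continuous_on UNIV (Nr lam I)"
  unfolding Nr_def[abs_def] divide_inverse by (intro continuous_intros continuous_on_product_coordinates)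

lemma cont_Qr: "continuous_on UNIV (Qr lam I)"
  unfolding Qr_def[abs_def] wr_def divide_inverse by (intro continuous_intros continuous_on_product_coordinates)



lemma exists_max:
  assumes sm: "strict_mono lam" and fin: "finite I" and ne: "n0 \<in> I"
  shows "\<exists>x0. (\<forall>n. n \<notin> I \<longrightarrow> x0 n = 0) \<and> Nr lam I x0 = 1 \<and>
           (\<forall>x. (\<forall>n. n \<notin> I \<longrightarrow> x n = 0) \<longrightarrow> Nr lam I x = 1 \<longrightarrow> Qr lam I x \<le> Qr lam I x0)"
proof -
  define B :: "(int \<Rightarrow> real) set" where "B = PiE UNIV (\<lambda>n. if n \<in> I then cball 0 (gap lam n + 1) else {0})"
  define S where "S = B \<inter> {x. Nr lam I x = 1}"
  have "compactin (product_topology (\<lambda>i. euclidean) UNIV) B"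
    unfolding B_def by (subst compactin_PiE) auto
  hence cB: "compact B" by (simp add: euclidean_product_topology)
  have cl: "closed {x. Nr lam I x = 1}"
    by (rule closed_Collect_eq[OF cont_Nr continuous_on_const])
  have cS: "compact S" unfolding S_def using cB cl by (rule compact_Int_closed)
  have memS: "x \<in> S" if sup: "\<forall>n. n \<notin> I \<longrightarrow> x n = 0" and nx: "Nr lam I x = 1" for x
  proof -
    have "x n \<in> (if n \<in> I then cball 0 (gap lam n + 1) else {0})" for n
    proof (cases "n \<in> I")
      case True
      have g: "0 < gap lam n" by (rule gap_pos[OF sm])
      have "(x n)^2 / gap lam n \<le> Nr lam I x" unfolding Nr_def
        using True fin by (intro member_le_sum) (auto intro!: divide_nonneg_nonneg simp: less_imp_le[OF gap_pos[OF sm]])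
      hence "(x n)^2 \<le> gap lam n" using nx g by (simp add: divide_le_eq)
      also have "\<dots> \<le> (gap lam n + 1)^2" using g by (simp add: power2_eq_square algebra_simps)
      finally have "\<bar>x n\<bar>^2 \<le> (gap lam n + 1)^2" by simp
      hence "\<bar>x n\<bar> \<le> gap lam n + 1" using g power2_le_imp_le[of "\<bar>x n\<bar>" "gap lam n + 1"] by simp
      then show ?thesis using True by (simp add: dist_real_def)
    qed (use sup in auto)
    then have "x \<in> B" unfolding B_def by (intro PiE_I) auto
    then show ?thesis unfolding S_def using nx by simp
  qed
  have Sne: "S \<noteq> {}"
  proof -
    define x where "x = (\<lambda>n. if n = n0 then sqrt (gap lam n0) else 0)"
    have g: "0 < gap lam n0" by (rule gap_pos[OF sm])
    have "Nr lam I x = (\<Sum>m\<in>I. if m = n0 then 1 else 0)"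
      unfolding Nr_def x_def using g by (intro sum.cong) auto
    also have "\<dots> = 1" using fin ne by simp
    finally have "x \<in> S" using ne by (intro memS) (auto simp: x_def)
    then show ?thesis by auto
  qed
  obtain x0 where x0: "x0 \<in> S" and mx: "\<And>y. y \<in> S \<Longrightarrow> Qr lam I y \<le> Qr lam I x0"
    using continuous_attains_sup[OF cS Sne continuous_on_subset[OF cont_Qr[of lam I]]] by auto
  have "\<forall>n. n \<notin> I \<longrightarrow> x0 n = 0"
  proof (intro allI impI)
    fix n assume "n \<notin> I"
    moreover have "x0 n \<in> (if n \<in> I then cball 0 (gap lam n + 1) else {0})"
      using x0 unfolding S_def B_def by (intro PiE_mem[of x0 UNIV]) auto
    ultimately show "x0 n = 0" by simp
  qed
  moreover have "Nr lam I x0 = 1" using x0 unfolding S_def by auto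
  ultimately show ?thesis using mx memS by blast
qed




lemma sum_delta_div:
  fixes f :: "int \<Rightarrow> real"
  assumes "finite A"
  shows "(\<Sum>k\<in>A. (if k = n then 1 else 0) / f k) = (if n \<in> A then 1 / f n else 0)"
proof -
  have "(\<Sum>k\<in>A. (if k = n then 1 else 0) / f k) = (\<Sum>k\<in>A. if k = n then 1 / f n else 0)"
    by (intro sum.cong) auto
  also have "\<dots> = (if n \<in> A then 1 / f n else 0)" using assms by (simp add: sum.delta)
  finally show ?thesis .
qed

lemma sum_if_ne:
  fixes f :: "int \<Rightarrow> real"
  assumes "finite A" "n \<in> A"
  shows "(\<Sum>m\<in>A. if m \<noteq> n then f m else 0) = (\<Sum>m\<in>A-{n}. f m)"
proof -
  have "A \<inter> {m. m \<noteq> n} = A - {n}" by auto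
  then show ?thesis using assms by (simp add: sum.If_cases)
qed

lemma global_bound:
  assumes sm: "strict_mono lam" and fin: "finite I"
    and mx: "\<And>x. (\<forall>n. n \<notin> I \<longrightarrow> x n = 0) \<Longrightarrow> Nr lam I x = 1 \<Longrightarrow> Qr lam I x \<le> \<sigma>"
  shows "Qr lam I x \<le> \<sigma> * Nr lam I x"
proof -
  define x' where "x' = (\<lambda>n. if n \<in> I then x n else 0)"
  have q: "Qr lam I x = Qr lam I x'" unfolding x'_def Qr_restrict ..
  have nn: "Nr lam I x = Nr lam I x'" unfolding x'_def Nr_restrict ..
  show ?thesis
  proof (cases "Nr lam I x' = 0")
    case True
    have "\<forall>n\<in>I. (x' n)^2 / gap lam n = 0"
      using True fin unfolding Nr_def
      by (subst sum_nonneg_eq_0_iff[symmetric]) (auto intro!: divide_nonneg_nonneg simp: less_imp_le[OF gap_pos[OF sm]])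
    have z: "\<forall>n\<in>I. x' n = 0"
    proof
      fix n assume "n \<in> I"
      hence "(x' n)^2 / gap lam n = 0" using \<open>\<forall>n\<in>I. (x' n)^2 / gap lam n = 0\<close> by blast
      moreover have "gap lam n \<noteq> 0" using gap_pos[OF sm, of n] by simp
      ultimately show "x' n = 0" by simp
    qed
    have "\<And>m. wr lam I x' m = 0" unfolding wr_def using z by (intro sum.neutral) auto
    hence "Qr lam I x' = 0" unfolding Qr_def by simp
    then show ?thesis using q nn True by simp
  next
    case False
    have pos: "0 < Nr lam I x'" using False Nr_nonneg[OF sm, of I x'] by simp
    define c where "c = 1 / sqrt (Nr lam I x')"
    have c2: "c^2 = 1 / Nr lam I x'" unfolding c_def using pos by (simp add: power_divide)
    have n1: "Nr lam I (\<lambda>n. c * x' n) = 1"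
    proof -
      have "Nr lam I (\<lambda>n. c * x' n) = c^2 * Nr lam I x'" by (rule Nr_scale)
      also have "\<dots> = 1" unfolding c2 using pos by simp
      finally show ?thesis .
    qed
    have sup: "\<forall>n. n \<notin> I \<longrightarrow> c * x' n = 0" unfolding x'_def by simp
    have "Qr lam I (\<lambda>n. c * x' n) \<le> \<sigma>" by (rule mx[OF sup n1])
    hence "c^2 * Qr lam I x' \<le> \<sigma>" by (simp only: Qr_scale)
    hence "Qr lam I x' / Nr lam I x' \<le> \<sigma>" unfolding c2 by simp
    hence "Qr lam I x' \<le> \<sigma> * Nr lam I x'" using pos by (simp add: pos_divide_le_eq)
    then show ?thesis using q nn by simp
  qed
qed

lemma lagrange:
  assumes sm: "strict_mono lam"
    and glob: "\<And>x. Qr lam I x \<le> \<sigma> * Nr lam I x"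
    and n1: "Nr lam I x0 = 1" and qs: "Qr lam I x0 = \<sigma>"
  shows "Bq lam I x0 y = \<sigma> * Bn lam I x0 y"
proof -
  have "0 \<le> (2 * \<sigma> * Bn lam I x0 y - 2 * Bq lam I x0 y) * t + (\<sigma> * Nr lam I y - Qr lam I y) * t^2" for t
  proof -
    have "Qr lam I (\<lambda>n. x0 n + t * y n) \<le> \<sigma> * Nr lam I (\<lambda>n. x0 n + t * y n)" by (rule glob)
    hence h: "\<sigma> + 2 * t * Bq lam I x0 y + t^2 * Qr lam I y \<le> \<sigma> * (1 + 2 * t * Bn lam I x0 y + t^2 * Nr lam I y)"
      unfolding Qr_expand Nr_expand n1 qs .
    have "(2 * \<sigma> * Bn lam I x0 y - 2 * Bq lam I x0 y) * t + (\<sigma> * Nr lam I y - Qr lam I y) * t^2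
        = \<sigma> * (1 + 2 * t * Bn lam I x0 y + t^2 * Nr lam I y) - (\<sigma> + 2 * t * Bq lam I x0 y + t^2 * Qr lam I y)"
      by algebra
    then show ?thesis using h by linarith
  qed
  hence "2 * \<sigma> * Bn lam I x0 y - 2 * Bq lam I x0 y = 0" by (rule quad_zero)
  then show ?thesis by simp
qed

lemma eigen_rel:
  assumes fin: "finite I" and n: "n \<in> I"
    and lagr: "\<And>y. Bq lam I x0 y = \<sigma> * Bn lam I x0 y"
  shows "wr lam I (\<lambda>m. gap lam m * wr lam I x0 m) n = - (\<sigma> * x0 n / gap lam n)"
proof -
  define e where "e = (\<lambda>k::int. if k = n then (1::real) else 0)"
  have we: "wr lam I e m = (if m \<noteq> n then 1 / (lam m - lam n) else 0)" if m: "m \<in> I" for m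
  proof -
    have "wr lam I e m = (if n \<in> I - {m} then 1 / (lam m - lam n) else 0)"
      unfolding wr_def e_def using sum_delta_div[of "I - {m}" n "\<lambda>k. lam m - lam k"] fin by simp
    then show ?thesis using n by auto
  qed
  have "Bq lam I x0 e = (\<Sum>m\<in>I. if m \<noteq> n then gap lam m * wr lam I x0 m / (lam m - lam n) else 0)"
    unfolding Bq_def by (intro sum.cong refl) (simp add: we)
  also have "\<dots> = (\<Sum>m\<in>I-{n}. gap lam m * wr lam I x0 m / (lam m - lam n))"
    by (rule sum_if_ne[OF fin n])
  finally have bq: "Bq lam I x0 e = (\<Sum>m\<in>I-{n}. gap lam m * wr lam I x0 m / (lam m - lam n))" .
  have "Bn lam I x0 e = (\<Sum>m\<in>I. if m = n then x0 n / gap lam n else 0)"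
    unfolding Bn_def e_def by (intro sum.cong) auto
  also have "\<dots> = x0 n / gap lam n" using fin n by (simp add: sum.delta)
  finally have bn: "Bn lam I x0 e = x0 n / gap lam n" .
  have "wr lam I (\<lambda>m. gap lam m * wr lam I x0 m) n = (\<Sum>m\<in>I-{n}. - (gap lam m * wr lam I x0 m / (lam m - lam n)))"
    unfolding wr_def[of lam I "\<lambda>m. gap lam m * wr lam I x0 m"]
  proof (intro sum.cong refl)
    fix m assume "m \<in> I - {n}"
    have "lam n - lam m = - (lam m - lam n)" by simp
    then show "gap lam m * wr lam I x0 m / (lam n - lam m) = - (gap lam m * wr lam I x0 m / (lam m - lam n))"
      by (simp only: divide_minus_right)
  qed
  also have "\<dots> = - Bq lam I x0 e" unfolding bq by (simp add: sum_negf)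
  also have "\<dots> = - (\<sigma> * x0 n / gap lam n)" unfolding lagr bn by simp
  finally show ?thesis .
qed



lemma sigma_bound:
  assumes sm: "strict_mono lam" and fin: "finite I"
    and diag: "\<And>n. n \<in> I \<Longrightarrow> (\<Sum>m\<in>I-{n}. gap lam m / (lam m - lam n)^2) \<le> P / gap lam n"
    and off: "\<And>t. (\<forall>n\<in>I. 0 \<le> t n) \<Longrightarrow>
       (\<Sum>m\<in>I. \<Sum>n\<in>I-{m}. gap lam m * t m * t n / (lam m - lam n)^2) \<le> C * (\<Sum>n\<in>I. (t n)^2 / gap lam n)"
    and n1: "Nr lam I x0 = 1"
    and vdef: "v = (\<lambda>m. gap lam m * wr lam I x0 m)"
    and eig: "\<And>n. n \<in> I \<Longrightarrow> wr lam I v n = - (\<sigma> * x0 n / gap lam n)"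
    and sp: "0 < \<sigma>"
  shows "\<sigma> \<le> P + 2 * C"
proof -
  define \<mu> where "\<mu> = sqrt \<sigma>"
  have mu: "0 < \<mu>" unfolding \<mu>_def using sp by simp
  have mu2: "\<mu> * \<mu> = \<sigma>" unfolding \<mu>_def using sp by simp
  define u where "u = (\<lambda>n. Complex (x0 n) (v n / \<mu>))"
  define r where "r = (\<lambda>m n. complex_of_real (1 / (lam m - lam n)))"
  define d where "d = (\<lambda>m. complex_of_real (gap lam m))"
  define g where "g = gap lam"
  have gp: "\<And>m. 0 < g m" unfolding g_def by (rule gap_pos[OF sm])
  have inj: "\<And>m n. m \<noteq> n \<Longrightarrow> lam m \<noteq> lam n" using sm by (metis strict_mono_eq)
  define wc where "wc = (\<lambda>m. \<Sum>n\<in>I-{m}. u n * r m n)"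
  define c where "c = (\<lambda>n. \<Sum>m\<in>I-{n}. d m * r m n)"
  define E where "E = (\<Sum>m\<in>I. \<Sum>n\<in>I-{m}. d m * u m * cnj (u n) * (r m n)^2)"
  have ident: "(\<Sum>m\<in>I. d m * (wc m * cnj (wc m)))
     = (\<Sum>n\<in>I. (u n * cnj (u n)) * (\<Sum>m\<in>I-{n}. d m * (r m n)^2)) + E + cnj E
       + (\<Sum>n\<in>I. c n * (u n * cnj (wc n) + cnj (u n) * wc n))"
    unfolding wc_def c_def E_def
  proof (rule triple_identity[OF fin])
    show "\<And>m n. r n m = - r m n" unfolding r_def
    proof -
      fix m n
      have "1 / (lam n - lam m) = - (1 / (lam m - lam n))"
        by (metis divide_minus_right minus_diff_eq)
      then show "complex_of_real (1 / (lam n - lam m)) = - complex_of_real (1 / (lam m - lam n))" by simp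
    qed
    show "\<And>m n. cnj (r m n) = r m n" unfolding r_def by simp
    show "\<And>m. cnj (d m) = d m" unfolding d_def by simp
    show "\<And>m n k. m \<in> I \<Longrightarrow> n \<in> I \<Longrightarrow> k \<in> I \<Longrightarrow> m \<noteq> n \<Longrightarrow> m \<noteq> k \<Longrightarrow> n \<noteq> k \<Longrightarrow>
              r m n * r m k = r n k * (r m n - r m k)"
    proof -
      fix m n k :: int assume "m \<noteq> n" "m \<noteq> k" "n \<noteq> k"
      hence a: "lam m - lam n \<noteq> 0" "lam m - lam k \<noteq> 0" "lam n - lam k \<noteq> 0" using inj by auto
      have "1 / (lam m - lam n) * (1 / (lam m - lam k)) = 1 / (lam n - lam k) * (1 / (lam m - lam n) - 1 / (lam m - lam k))"
        using a by (simp add: field_simps)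
      then show "r m n * r m k = r n k * (r m n - r m k)" unfolding r_def
        by (metis of_real_diff of_real_mult)
    qed
  qed
  have wcf: "wc m = Complex (v m / g m) (- (\<mu> * x0 m / g m))" if m: "m \<in> I" for m
  proof (rule complex_eqI)
    have "Re (wc m) = (\<Sum>n\<in>I-{m}. x0 n / (lam m - lam n))"
      unfolding wc_def u_def r_def by (simp add: Re_sum)
    also have "\<dots> = wr lam I x0 m" unfolding wr_def ..
    also have "\<dots> = v m / g m" unfolding vdef g_def using gp[of m] by (simp add: g_def)
    finally show "Re (wc m) = Re (Complex (v m / g m) (- (\<mu> * x0 m / g m)))" by simp
    have "Im (wc m) = (\<Sum>n\<in>I-{m}. v n / \<mu> / (lam m - lam n))"
      unfolding wc_def u_def r_def by (simp add: Im_sum)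
    also have "\<dots> = wr lam I v m / \<mu>" unfolding wr_def sum_divide_distrib
      by (intro sum.cong refl) (simp add: field_simps)
    also have "\<dots> = - (\<sigma> * x0 m / g m) / \<mu>" unfolding g_def using eig[OF m] by simp
    also have "\<dots> = - (\<mu> * x0 m / g m)" using mu mu2[symmetric] by (simp add: field_simps)
    finally show "Im (wc m) = Im (Complex (v m / g m) (- (\<mu> * x0 m / g m)))" by simp
  qed
  define Nu where "Nu = (\<Sum>n\<in>I. (cmod (u n))^2 / g n)"
  have cu: "\<And>n. (cmod (u n))^2 = (x0 n)^2 + (v n / \<mu>)^2" unfolding u_def by (simp add: cmod_def)
  have fa: "d m * (wc m * cnj (wc m)) = complex_of_real (\<sigma> * (cmod (u m))^2 / g m)" if m: "m \<in> I" for m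
  proof -
    have "wc m * cnj (wc m) = complex_of_real ((cmod (wc m))^2)" using complex_norm_square[of "wc m"] by simp
    also have "(cmod (wc m))^2 = (v m / g m)^2 + (\<mu> * x0 m / g m)^2" unfolding wcf[OF m] by (simp add: cmod_def)
    finally have "d m * (wc m * cnj (wc m)) = complex_of_real (g m * ((v m / g m)^2 + (\<mu> * x0 m / g m)^2))"
      unfolding d_def g_def by simp
    also have "g m * ((v m / g m)^2 + (\<mu> * x0 m / g m)^2) = \<sigma> * (cmod (u m))^2 / g m"
      unfolding cu using gp[of m] mu mu2[symmetric] by (simp add: field_simps power2_eq_square)
    finally show ?thesis .
  qed
  have fb: "u n * cnj (wc n) + cnj (u n) * wc n = 0" if n: "n \<in> I" for n
    unfolding wcf[OF n] u_def using mu gp[of n] by (simp add: complex_eq_iff field_simps)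
  have lhs: "(\<Sum>m\<in>I. d m * (wc m * cnj (wc m))) = complex_of_real (\<sigma> * Nu)"
    unfolding Nu_def sum_distrib_left using fa by (simp add: sum_divide_distrib)
  have r0: "(\<Sum>n\<in>I. c n * (u n * cnj (wc n) + cnj (u n) * wc n)) = 0"
    using fb by (intro sum.neutral) auto
  define T1 where "T1 = (\<Sum>n\<in>I. (cmod (u n))^2 * (\<Sum>m\<in>I-{n}. g m / (lam m - lam n)^2))"
  have t1: "(\<Sum>n\<in>I. (u n * cnj (u n)) * (\<Sum>m\<in>I-{n}. d m * (r m n)^2)) = complex_of_real T1"
    unfolding T1_def d_def r_def g_def
    by (simp add: complex_norm_square[symmetric] power_divide)
  have t2: "E + cnj E = complex_of_real (2 * Re E)" by (simp add: complex_add_cnj)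
  have "complex_of_real (\<sigma> * Nu) = complex_of_real (T1 + 2 * Re E)"
    using ident unfolding lhs t1 r0 by (simp add: t2 add.assoc)
  hence key: "\<sigma> * Nu = T1 + 2 * Re E" by (simp only: of_real_eq_iff)
  have b1: "T1 \<le> P * Nu"
  proof -
    have "T1 \<le> (\<Sum>n\<in>I. (cmod (u n))^2 * (P / g n))"
      unfolding T1_def g_def using diag by (intro sum_mono mult_left_mono) auto
    also have "\<dots> = P * Nu" unfolding Nu_def sum_distrib_left by (intro sum.cong refl) simp
    finally show ?thesis .
  qed
  have b2: "Re E \<le> C * Nu"
  proof -
    have "Re E \<le> cmod E" by (rule complex_Re_le_cmod)
    also have "\<dots> \<le> (\<Sum>m\<in>I. cmod (\<Sum>n\<in>I-{m}. d m * u m * cnj (u n) * (r m n)^2))"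
      unfolding E_def by (rule norm_sum)
    also have "\<dots> \<le> (\<Sum>m\<in>I. \<Sum>n\<in>I-{m}. cmod (d m * u m * cnj (u n) * (r m n)^2))"
      by (intro sum_mono norm_sum)
    also have "\<dots> = (\<Sum>m\<in>I. \<Sum>n\<in>I-{m}. gap lam m * cmod (u m) * cmod (u n) / (lam m - lam n)^2)"
    proof (intro sum.cong refl)
      fix m n
      show "cmod (d m * u m * cnj (u n) * (r m n)^2) = gap lam m * cmod (u m) * cmod (u n) / (lam m - lam n)^2"
      proof -
        have "cmod (d m * u m * cnj (u n) * (r m n)^2) = cmod (d m) * cmod (u m) * cmod (u n) * (cmod (r m n))^2"
          by (simp only: norm_mult norm_power complex_mod_cnj)
        also have "cmod (d m) = gap lam m" unfolding d_def using gp[of m] unfolding g_def by simp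
        also have "(cmod (r m n))^2 = 1 / (lam m - lam n)^2" unfolding r_def norm_of_real power2_abs
          by (simp add: power_divide)
        finally show ?thesis by simp
      qed
    qed
    also have "\<dots> \<le> C * (\<Sum>n\<in>I. (cmod (u n))^2 / gap lam n)"
      by (rule off) simp
    also have "\<dots> = C * Nu" unfolding Nu_def g_def ..
    finally show ?thesis .
  qed
  have nu1: "1 \<le> Nu"
  proof -
    have "1 = (\<Sum>n\<in>I. (x0 n)^2 / g n)" using n1 unfolding Nr_def g_def by simp
    also have "\<dots> \<le> Nu" unfolding Nu_def cu using gp
      by (intro sum_mono divide_right_mono) (auto simp: less_imp_le)
    finally show ?thesis .
  qed
  have "\<sigma> * Nu \<le> (P + 2 * C) * Nu" using key b1 b2 by (simp add: algebra_simps)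
  then show ?thesis using nu1 by simp
qed



lemma main_real:
  assumes sm: "strict_mono lam" and fin: "finite I" and ne: "n0 \<in> I"
    and diag: "\<And>n. n \<in> I \<Longrightarrow> (\<Sum>m\<in>I-{n}. gap lam m / (lam m - lam n)^2) \<le> P / gap lam n"
    and off: "\<And>t. (\<forall>n\<in>I. 0 \<le> t n) \<Longrightarrow>
       (\<Sum>m\<in>I. \<Sum>n\<in>I-{m}. gap lam m * t m * t n / (lam m - lam n)^2) \<le> C * (\<Sum>n\<in>I. (t n)^2 / gap lam n)"
    and K: "0 \<le> P + 2 * C"
  shows "Qr lam I x \<le> (P + 2 * C) * Nr lam I x"
proof -
  obtain x0 where sup: "\<forall>n. n \<notin> I \<longrightarrow> x0 n = 0" and n1: "Nr lam I x0 = 1"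
    and mx: "\<forall>x. (\<forall>n. n \<notin> I \<longrightarrow> x n = 0) \<longrightarrow> Nr lam I x = 1 \<longrightarrow> Qr lam I x \<le> Qr lam I x0"
    using exists_max[OF sm fin ne] by blast
  define \<sigma> where "\<sigma> = Qr lam I x0"
  have glob: "\<And>x. Qr lam I x \<le> \<sigma> * Nr lam I x"
    unfolding \<sigma>_def using sm fin by (rule global_bound) (use mx in blast)
  have lagr: "\<And>y. Bq lam I x0 y = \<sigma> * Bn lam I x0 y"
    using sm glob n1 by (rule lagrange) (simp add: \<sigma>_def)
  have sb: "\<sigma> \<le> P + 2 * C"
  proof (cases "0 < \<sigma>")
    case True
    define v where "v = (\<lambda>m. gap lam m * wr lam I x0 m)"
    show ?thesis
    proof (rule sigma_bound[OF sm fin diag off n1 _ _ True])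
      show "v = (\<lambda>m. gap lam m * wr lam I x0 m)" by (rule v_def)
      show "\<And>n. n \<in> I \<Longrightarrow> wr lam I v n = - (\<sigma> * x0 n / gap lam n)"
        unfolding v_def using eigen_rel[OF fin _ lagr] by blast
    qed auto
  next
    case False
    then show ?thesis using K by simp
  qed
  have "Qr lam I x \<le> \<sigma> * Nr lam I x" by (rule glob)
  also have "\<dots> \<le> (P + 2 * C) * Nr lam I x" using sb Nr_nonneg[OF sm] by (rule mult_right_mono)
  finally show ?thesis .
qed

theorem proposition1:
  fixes N :: nat and lam :: "int \<Rightarrow> real" and C3 :: real
  assumes "N \<ge> 1"
    and "strict_mono lam"
    and "C3 > 0"
    and "\<And>t :: int \<Rightarrow> real. (\<forall>n\<in>{1..int N}. t n \<ge> 0) \<Longrightarrow>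
           (\<Sum>m\<in>{1..int N}. \<Sum>n\<in>{1..int N} - {m}.
              gap lam m powr (3/2) * gap lam n powr (1/2) * t m * t n / (lam m - lam n)^2)
           \<le> C3 * (\<Sum>n\<in>{1..int N}. (t n)^2)"
  shows "\<And>z :: int \<Rightarrow> complex.
           cmod (\<Sum>m\<in>{1..int N}. \<Sum>n\<in>{1..int N} - {m}.
              z m * cnj (z n) / complex_of_real (lam m - lam n))
           \<le> sqrt (pi^2 / 3 + 2 * C3) * (\<Sum>n\<in>{1..int N}. (cmod (z n))^2 / gap lam n)"
proof -
  fix z :: "int \<Rightarrow> complex"
  define I where "I = {1..int N}"
  define K where "K = pi^2 / 3 + 2 * C3"
  note sm = assms(2)
  have fin: "finite I" unfolding I_def by simp
  have ne: "1 \<in> I" unfolding I_def using assms(1) by simp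
  have gp: "\<And>m. 0 < gap lam m" by (rule gap_pos[OF sm])
  have gnz: "\<And>m. gap lam m \<noteq> 0" using gp by (metis less_irrefl)
  have diag: "\<And>n. n \<in> I \<Longrightarrow> (\<Sum>m\<in>I-{n}. gap lam m / (lam m - lam n)^2) \<le> (pi^2/3) / gap lam n"
    unfolding I_def using diag_bound[OF sm] by simp
  have off: "(\<Sum>m\<in>I. \<Sum>n\<in>I-{m}. gap lam m * t m * t n / (lam m - lam n)^2) \<le> C3 * (\<Sum>n\<in>I. (t n)^2 / gap lam n)"
    if t: "\<forall>n\<in>I. 0 \<le> t n" for t
  proof -
    define t' where "t' = (\<lambda>n. t n / sqrt (gap lam n))"
    have "\<forall>n\<in>{1..int N}. t' n \<ge> 0" using t unfolding t'_def I_def by (auto intro!: divide_nonneg_nonneg simp: less_imp_le[OF gp])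
    hence h: "(\<Sum>m\<in>I. \<Sum>n\<in>I - {m}.
              gap lam m powr (3/2) * gap lam n powr (1/2) * t' m * t' n / (lam m - lam n)^2)
           \<le> C3 * (\<Sum>n\<in>I. (t' n)^2)" unfolding I_def by (rule assms(4))
    have p32: "\<And>g::real. 0 < g \<Longrightarrow> g powr (3/2) = g * sqrt g"
    proof -
      fix g :: real assume g: "0 < g"
      have "g powr (3/2) = g powr (1 + 1/2)" by simp
      also have "\<dots> = g powr 1 * g powr (1/2)" by (rule powr_add)
      finally show "g powr (3/2) = g * sqrt g" using g by (simp add: powr_half_sqrt)
    qed
    have e1: "(\<Sum>m\<in>I. \<Sum>n\<in>I - {m}.
              gap lam m powr (3/2) * gap lam n powr (1/2) * t' m * t' n / (lam m - lam n)^2)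
         = (\<Sum>m\<in>I. \<Sum>n\<in>I-{m}. gap lam m * t m * t n / (lam m - lam n)^2)"
    proof (intro sum.cong refl)
      fix m n
      have a: "0 < sqrt (gap lam m)" "0 < sqrt (gap lam n)" using gp by auto
      show "gap lam m powr (3/2) * gap lam n powr (1/2) * t' m * t' n / (lam m - lam n)^2
          = gap lam m * t m * t n / (lam m - lam n)^2"
        unfolding p32[OF gp[of m]] powr_half_sqrt[OF less_imp_le[OF gp[of n]]] t'_def
        using a by (simp add: field_simps)
    qed
    have e2: "(\<Sum>n\<in>I. (t' n)^2) = (\<Sum>n\<in>I. (t n)^2 / gap lam n)"
      unfolding t'_def using gp by (intro sum.cong refl) (simp add: power_divide less_imp_le)
    show ?thesis using h unfolding e1 e2 .
  qed
  have K0: "0 \<le> pi^2/3 + 2 * C3" using assms(3) by (simp add: add_nonneg_nonneg)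
  have MR: "\<And>x. Qr lam I x \<le> K * Nr lam I x"
    unfolding K_def by (rule main_real[OF sm fin ne diag off K0])
  define wc where "wc = (\<lambda>m. \<Sum>n\<in>I-{m}. z n / complex_of_real (lam m - lam n))"
  define Nz where "Nz = (\<Sum>n\<in>I. (cmod (z n))^2 / gap lam n)"
  define Qz where "Qz = (\<Sum>m\<in>I. gap lam m * (cmod (wc m))^2)"
  have rew: "Re (wc m) = wr lam I (\<lambda>n. Re (z n)) m" "Im (wc m) = wr lam I (\<lambda>n. Im (z n)) m" for m
    unfolding wc_def wr_def by (simp_all add: Re_sum Im_sum Re_divide_of_real Im_divide_of_real)
  have "Qz = Qr lam I (\<lambda>n. Re (z n)) + Qr lam I (\<lambda>n. Im (z n))"
    unfolding Qz_def Qr_def cmod_power2 rew[symmetric] by (simp add: sum.distrib distrib_left)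
  also have "\<dots> \<le> K * Nr lam I (\<lambda>n. Re (z n)) + K * Nr lam I (\<lambda>n. Im (z n))"
    by (intro add_mono MR)
  also have "\<dots> = K * Nz"
    unfolding Nz_def Nr_def cmod_power2 by (simp add: sum.distrib distrib_left add_divide_distrib)
  finally have QK: "Qz \<le> K * Nz" .
  have Sdef: "(\<Sum>m\<in>I. \<Sum>n\<in>I - {m}. z m * cnj (z n) / complex_of_real (lam m - lam n))
      = (\<Sum>m\<in>I. z m * cnj (wc m))"
    unfolding wc_def by (simp add: cnj_sum sum_distrib_left)
  have "cmod (\<Sum>m\<in>I. z m * cnj (wc m)) \<le> (\<Sum>m\<in>I. cmod (z m) * cmod (wc m))"
    by (rule order_trans[OF norm_sum]) (simp add: norm_mult)
  also have "\<dots> = (\<Sum>m\<in>I. (cmod (z m) / sqrt (gap lam m)) * (sqrt (gap lam m) * cmod (wc m)))"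
    using gp gnz by (intro sum.cong refl) simp
  also have "\<dots> \<le> sqrt K * Nz"
  proof -
    let ?s = "(\<Sum>m\<in>I. (cmod (z m) / sqrt (gap lam m)) * (sqrt (gap lam m) * cmod (wc m)))"
    have "?s^2 \<le> (\<Sum>m\<in>I. (cmod (z m) / sqrt (gap lam m))^2) * (\<Sum>m\<in>I. (sqrt (gap lam m) * cmod (wc m))^2)"
      by (rule Cauchy_Schwarz_ineq_sum)
    also have "(\<Sum>m\<in>I. (cmod (z m) / sqrt (gap lam m))^2) = Nz"
      unfolding Nz_def using gp by (intro sum.cong refl) (simp add: power_divide less_imp_le)
    also have "(\<Sum>m\<in>I. (sqrt (gap lam m) * cmod (wc m))^2) = Qz"
      unfolding Qz_def using gp by (intro sum.cong refl) (simp add: power_mult_distrib less_imp_le)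
    also have "Nz * Qz \<le> Nz * (K * Nz)"
      using QK by (rule mult_left_mono) (simp add: Nz_def sum_nonneg less_imp_le[OF gp])
    also have "\<dots> = (sqrt K * Nz)^2" using K0 unfolding K_def by (simp add: power2_eq_square power_mult_distrib)
    finally have "?s^2 \<le> (sqrt K * Nz)^2" .
    moreover have "0 \<le> sqrt K * Nz" using K0 unfolding K_def Nz_def
      by (intro mult_nonneg_nonneg sum_nonneg divide_nonneg_nonneg) (auto simp: less_imp_le[OF gp])
    ultimately show ?thesis by (rule power2_le_imp_le)
  qed
  finally show "cmod (\<Sum>m\<in>{1..int N}. \<Sum>n\<in>{1..int N} - {m}.
              z m * cnj (z n) / complex_of_real (lam m - lam n))
           \<le> sqrt (pi^2 / 3 + 2 * C3) * (\<Sum>n\<in>{1..int N}. (cmod (z n))^2 / gap lam n)"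
    unfolding Sdef[unfolded I_def] K_def Nz_def I_def .
qed

end
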